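(* Let $a>0$ and let $k$ be a positive integer. Let $\psi(t)=\sum_{n\ge1}e^{-\pi n^2 t/a}$, $\phi(t)=\sum_{n\ge1}e^{-\pi n^2 a t}$, and \[\epsilon_{2k}(a)=\frac{1}{4\pi a}\int_1^\infty \{\psi(t)+a^{1/2}\phi(t)\}\,\frac{(t-1)^{2k}}{(1+t)^{2k+3/2}}\,dt.\] Let $\Psi(\tau)=\sum_{n\ge1}e^{-\pi n^2\tau}$ for $\tau>0$ and $E_{2k}(a)=a^{1/4}\Psi(a)\,U(2k+1,\tfrac12,2\pi a)$. Then \[\epsilon_{2k}(a)<\mathcal{B}_{2k}(a):=\frac{a^{-3/4}(2k)!}{4\sqrt{2}\,\pi}\{E_{2k}(a)+E_{2k}(1/a)\}.\]
   Context: $U(\alpha,b,z)$ denotes the confluent hypergeometric function of the second kind (Tricomi's function), which for $\alpha>0$, $\Re z>0$ has the representation $U(\alpha,b,z)=\frac{1}{\Gamma(\alpha)}\int_0^\infty e^{-zt}t^{\alpha-1}(1+t)^{b-\alpha-1}dt$. *)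

theory Defs
  imports "HOL-Analysis.Analysis"
begin

text \<open>Tricomi's confluent hypergeometric function U(alpha,b,z) for real alpha > 0, z > 0,
  via its integral representation.\<close>
definition tricomiU :: "real \<Rightarrow> real \<Rightarrow> real \<Rightarrow> real" where
  "tricomiU \<alpha> b z = (1 / Gamma \<alpha>) *
     (LBINT t:{0<..}. exp (- z * t) * t powr (\<alpha> - 1) * (1 + t) powr (b - \<alpha> - 1))"

definition PsiTheta :: "real \<Rightarrow> real" where
  "PsiTheta \<tau> = (\<Sum>n. exp (- pi * (real (Suc n))\<^sup>2 * \<tau>))"

definition psiA :: "real \<Rightarrow> real \<Rightarrow> real" where
  "psiA a t = (\<Sum>n. exp (- pi * (real (Suc n))\<^sup>2 * t / a))"

definition phiA :: "real \<Rightarrow> real \<Rightarrow> real" where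
  "phiA a t = (\<Sum>n. exp (- pi * (real (Suc n))\<^sup>2 * a * t))"

definition epsilon :: "nat \<Rightarrow> real \<Rightarrow> real" where
  "epsilon k a = 1 / (4 * pi * a) *
     (LBINT t:{1..}. (psiA a t + a powr (1/2) * phiA a t) *
        ((t - 1) ^ (2 * k) / (1 + t) powr (real (2 * k) + 3 / 2)))"

definition E_fun :: "nat \<Rightarrow> real \<Rightarrow> real" where
  "E_fun k a = a powr (1/4) * PsiTheta a * tricomiU (real (2 * k + 1)) (1/2) (2 * pi * a)"

definition B_bound :: "nat \<Rightarrow> real \<Rightarrow> real" where
  "B_bound k a = a powr (-3/4) * fact (2 * k) / (4 * sqrt 2 * pi) * (E_fun k a + E_fun k (1 / a))"

end

theory Submission
  imports Defs
begin


lemma term_le: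
  fixes x t :: real and n :: nat
  assumes "x > 0" "t \<ge> 1"
  shows "exp (- pi * (real (Suc n))\<^sup>2 * x * t) \<le> exp (- pi * (real (Suc n))\<^sup>2 * x) * exp (- pi * x * (t - 1))"
proof -
  have "(real (Suc n))\<^sup>2 \<ge> 1" by simp
  hence "pi * x * (t - 1) * ((real (Suc n))\<^sup>2 - 1) \<ge> 0" using assms by (intro mult_nonneg_nonneg) auto
  hence "- pi * (real (Suc n))\<^sup>2 * x * t \<le> - pi * (real (Suc n))\<^sup>2 * x + - pi * x * (t - 1)"
    by (simp add: algebra_simps)
  thus ?thesis by (simp add: exp_add[symmetric])
qed

lemma term_less:
  fixes x t :: real
  assumes "x > 0" "t > 1"
  shows "exp (- pi * (real (Suc 1))\<^sup>2 * x * t) < exp (- pi * (real (Suc 1))\<^sup>2 * x) * exp (- pi * x * (t - 1))"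
proof -
  have "pi * x * (t - 1) * 3 > 0" using assms by simp
  hence "- pi * (real (Suc 1))\<^sup>2 * x * t < - pi * (real (Suc 1))\<^sup>2 * x + - pi * x * (t - 1)"
    by (simp add: algebra_simps power2_eq_square)
  thus ?thesis by (simp add: exp_add[symmetric])
qed

lemma summ:
  fixes x :: real assumes "x > 0"
  shows "summable (\<lambda>n. exp (- pi * (real (Suc n))\<^sup>2 * x))"
proof (rule summable_comparison_test')
  show "summable (\<lambda>n. exp (- pi * x) ^ n)" using assms by (intro summable_geometric) simp
  fix n :: nat assume "n \<ge> 0"
  have "(1 + real n) * 1 \<le> (1 + real n) * (1 + real n)" by (intro mult_left_mono) auto
  hence "real n \<le> (real (Suc n))\<^sup>2" unfolding power2_eq_square of_nat_Suc by (smt (verit))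
  hence "pi * x * real n \<le> pi * x * (real (Suc n))\<^sup>2" using assms by (intro mult_left_mono) auto
  hence "exp (- pi * (real (Suc n))\<^sup>2 * x) \<le> exp (- pi * x * real n)" by (simp add: algebra_simps)
  thus "norm (exp (- pi * (real (Suc n))\<^sup>2 * x)) \<le> exp (- pi * x) ^ n"
    by (simp add: exp_of_nat_mult[symmetric] mult.commute)
qed

lemma series_bound:
  fixes x t :: real
  assumes "x > 0" "t \<ge> 1"
  shows "(\<Sum>n. exp (- pi * (real (Suc n))\<^sup>2 * x * t)) \<le> PsiTheta x * exp (- pi * x * (t - 1))"
    and "t > 1 \<Longrightarrow> (\<Sum>n. exp (- pi * (real (Suc n))\<^sup>2 * x * t)) < PsiTheta x * exp (- pi * x * (t - 1))"
proof -
  have s1: "summable (\<lambda>n. exp (- pi * (real (Suc n))\<^sup>2 * x * t))"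
    using summ[of "x * t"] assms by (simp add: mult.assoc)
  have s2: "summable (\<lambda>n. exp (- pi * (real (Suc n))\<^sup>2 * x) * exp (- pi * x * (t - 1)))"
    using summ[OF assms(1)] by (rule summable_mult2)
  have eq: "PsiTheta x * exp (- pi * x * (t - 1)) = (\<Sum>n. exp (- pi * (real (Suc n))\<^sup>2 * x) * exp (- pi * x * (t - 1)))"
    unfolding PsiTheta_def using summ[OF assms(1)] by (simp add: suminf_mult2)
  show "(\<Sum>n. exp (- pi * (real (Suc n))\<^sup>2 * x * t)) \<le> PsiTheta x * exp (- pi * x * (t - 1))"
    unfolding eq by (rule suminf_le[OF term_le[OF assms] s1 s2])
  assume "t > 1"
  have "0 < (\<Sum>n. exp (- pi * (real (Suc n))\<^sup>2 * x) * exp (- pi * x * (t - 1)) - exp (- pi * (real (Suc n))\<^sup>2 * x * t))"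
    apply (rule suminf_pos2[where i=1])
    using s1 s2 term_le[OF assms] term_less[OF assms(1) \<open>t > 1\<close>] by (auto intro: summable_diff)
  also have "\<dots> = PsiTheta x * exp (- pi * x * (t - 1)) - (\<Sum>n. exp (- pi * (real (Suc n))\<^sup>2 * x * t))"
    unfolding eq by (rule suminf_diff[OF s2 s1, symmetric])
  finally show "(\<Sum>n. exp (- pi * (real (Suc n))\<^sup>2 * x * t)) < PsiTheta x * exp (- pi * x * (t - 1))" by simp
qed



definition wk :: "nat \<Rightarrow> real \<Rightarrow> real" where
  "wk k t = (t - 1) ^ (2 * k) / (1 + t) powr (real (2 * k) + 3 / 2)"

definition Hk :: "nat \<Rightarrow> real \<Rightarrow> real \<Rightarrow> real" where
  "Hk k z s = exp (- z * s) * s powr (real (2 * k + 1) - 1) * (1 + s) powr (1/2 - real (2 * k + 1) - 1)"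

lemma Hk_pos: "s > 0 \<Longrightarrow> Hk k z s = exp (- z * s) * s ^ (2 * k) / (1 + s) powr (real (2 * k) + 3 / 2)"
proof -
  assume s: "s > 0"
  have "s powr (real (2 * k + 1) - 1) = s ^ (2 * k)" using powr_realpow[OF s, of "2*k"] by simp
  moreover have "(1 + s) powr (1/2 - real (2 * k + 1) - 1) = 1 / (1 + s) powr (real (2 * k) + 3 / 2)"
  proof -
    have "1/2 - real (2 * k + 1) - 1 = - (real (2 * k) + 3 / 2)" by simp
    thus ?thesis by (simp only: powr_minus_divide)
  qed
  ultimately show ?thesis unfolding Hk_def by simp
qed

lemma Hk_bound: "s > 0 \<Longrightarrow> z \<ge> 0 \<Longrightarrow> \<bar>Hk k z s\<bar> \<le> exp (- z * s)"
proof -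
  assume s: "s > 0" and z: "z \<ge> 0"
  have "s ^ (2 * k) \<le> (1 + s) ^ (2 * k)" using s by (intro power_mono) auto
  also have "\<dots> = (1 + s) powr (real (2 * k))" using s powr_realpow[of "1+s" "2*k"] by simp
  also have "\<dots> \<le> (1 + s) powr (real (2 * k) + 3 / 2)" using s by (intro powr_mono) auto
  moreover have pos: "(1 + s) powr (real (2 * k) + 3 / 2) > 0" using s by simp
  ultimately have "s ^ (2 * k) / (1 + s) powr (real (2 * k) + 3 / 2) \<le> 1" by (simp add: pos_divide_le_eq[OF pos])
  hence "exp (- z * s) * (s ^ (2 * k) / (1 + s) powr (real (2 * k) + 3 / 2)) \<le> exp (- z * s) * 1"
    by (intro mult_left_mono) auto
  moreover have "Hk k z s \<ge> 0" using s unfolding Hk_def by simp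
  ultimately show ?thesis using Hk_pos[OF s] by simp
qed

lemma exp_set_integrable:
  assumes "z > 0" shows "integrable lborel (\<lambda>s. indicator {0..} s *\<^sub>R exp (- z * s) :: real)"
proof -
  have "(\<lambda>s. exp (- z * s)) absolutely_integrable_on {0..}"
    using assms by (intro nonnegative_absolutely_integrable_1 integrable_on_exp_minus_to_infinity) auto
  hence "integrable lebesgue (\<lambda>s. indicator {0..} s *\<^sub>R exp (- z * s) :: real)"
    unfolding set_integrable_def .
  thus ?thesis by (subst (asm) integrable_completion) auto
qed

lemma Hk_integrable:
  assumes "z > 0" shows "integrable lborel (\<lambda>s. indicator {0<..} s *\<^sub>R Hk k z s)"
proof (rule Bochner_Integration.integrable_bound[OF exp_set_integrable[OF assms]])
  show "(\<lambda>s. indicator {0<..} s *\<^sub>R Hk k z s) \<in> borel_measurable lborel"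
    unfolding Hk_def by measurable
  show "AE s in lborel. norm (indicator {0<..} s *\<^sub>R Hk k z s) \<le> norm (indicator {0..} s *\<^sub>R exp (- z * s))"
    using Hk_bound assms by (intro AE_I2) (auto simp: indicator_def)
qed

lemma tricomi_eq:
  "(\<integral>s. indicator {0<..} s *\<^sub>R Hk k z s \<partial>lborel) = fact (2 * k) * tricomiU (real (2 * k + 1)) (1/2) z"
proof -
  have G: "Gamma (real (2 * k + 1)) = fact (2 * k)"
    using Gamma_fact[of "2 * k", where 'a = real] by (simp add: add.commute)
  have "fact (2 * k) \<noteq> (0::real)" by simp
  have "tricomiU (real (2 * k + 1)) (1/2) z = (1 / fact (2 * k)) * (\<integral>s. indicator {0<..} s *\<^sub>R Hk k z s \<partial>lborel)"
    unfolding tricomiU_def G set_lebesgue_integral_def Hk_def by (rule refl)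
  thus ?thesis using \<open>fact (2 * k) \<noteq> (0::real)\<close> by simp
qed

lemma subst_pt:
  assumes "k \<ge> 1"
  shows "indicator {1..} (1 + 2 * s) *\<^sub>R (exp (- (z / 2) * ((1 + 2 * s) - 1)) * wk k (1 + 2 * s))
     = 2 powr (-3/2) * (indicator {0<..} s *\<^sub>R Hk k z s)"
proof (cases "s > 0")
  case True
  have a: "(2 * s) ^ (2 * k) = 2 ^ (2 * k) * s ^ (2 * k)" by (simp add: power_mult_distrib)
  have b: "(1 + (1 + 2 * s)) powr (real (2 * k) + 3 / 2) = 2 powr (real (2 * k) + 3 / 2) * (1 + s) powr (real (2 * k) + 3 / 2)"
    using True by (subst powr_mult[symmetric]) (auto simp: algebra_simps)
  have c: "2 powr (real (2 * k) + 3 / 2) = 2 ^ (2 * k) * 2 powr (3/2)"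
    using powr_realpow[of 2 "2*k"] by (simp add: powr_add)
  have d: "2 powr (-3/2) = 1 / (2 powr (3/2) :: real)" by (simp add: powr_minus_divide)
  show ?thesis using True unfolding Hk_pos[OF True] wk_def a b c d
    by (simp add: field_simps)
next
  case False
  hence "\<not> (1 + 2 * s > 1) " by simp
  moreover have "1 + 2 * s = 1 \<Longrightarrow> wk k (1 + 2 * s) = 0" using assms unfolding wk_def by simp
  ultimately show ?thesis using False by (auto simp: indicator_def)
qed

lemma main_integral:
  assumes "k \<ge> 1" "z > 0"
  shows "set_integrable lborel {1..} (\<lambda>t. exp (- (z / 2) * (t - 1)) * wk k t)"
    and "(LBINT t:{1..}. exp (- (z / 2) * (t - 1)) * wk k t) = 2 powr (-1/2) * fact (2 * k) * tricomiU (real (2 * k + 1)) (1/2) z"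
proof -
  define g where "g t = indicator {1..} t *\<^sub>R (exp (- (z / 2) * (t - 1)) * wk k t)" for t
  have eq: "(\<lambda>s. g (1 + 2 * s)) = (\<lambda>s. 2 powr (-3/2) * (indicator {0<..} s *\<^sub>R Hk k z s))"
    unfolding g_def using subst_pt[OF assms(1)] by auto
  have "integrable lborel (\<lambda>s. g (1 + 2 * s))" unfolding eq
    by (intro integrable_mult_right Hk_integrable assms)
  hence "integrable lborel g" using lborel_integrable_real_affine_iff[of 2 g 1] by simp
  thus "set_integrable lborel {1..} (\<lambda>t. exp (- (z / 2) * (t - 1)) * wk k t)"
    unfolding set_integrable_def g_def .
  have "(\<integral>t. g t \<partial>lborel) = \<bar>2\<bar> *\<^sub>R (\<integral>s. g (1 + 2 * s) \<partial>lborel)"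
    by (rule lborel_integral_real_affine) simp
  also have "\<dots> = 2 * 2 powr (-3/2) * (fact (2 * k) * tricomiU (real (2 * k + 1)) (1/2) z)"
    unfolding eq integral_mult_right_zero tricomi_eq by simp
  also have "2 * 2 powr (-3/2) = (2 powr (-1/2) :: real)"
    using powr_add[of "2::real" 1 "-3/2"] by simp
  finally show "(LBINT t:{1..}. exp (- (z / 2) * (t - 1)) * wk k t) = 2 powr (-1/2) * fact (2 * k) * tricomiU (real (2 * k + 1)) (1/2) z"
    unfolding set_lebesgue_integral_def g_def by simp
qed



lemma pos_integral:
  fixes f :: "real \<Rightarrow> real"
  assumes int: "integrable lborel f" and nn: "\<And>x. f x \<ge> 0" and pos: "\<And>x. x \<in> {1<..<2} \<Longrightarrow> f x > 0"
  shows "integral\<^sup>L lborel f > 0"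
proof -
  have "integral\<^sup>L lborel f \<ge> 0" using nn by simp
  moreover have "integral\<^sup>L lborel f \<noteq> 0"
  proof
    assume "integral\<^sup>L lborel f = 0"
    hence "AE x in lborel. f x = 0" using integral_nonneg_eq_0_iff_AE[OF int] nn by simp
    hence "AE x in lborel. x \<notin> {1<..<(2::real)}" by eventually_elim (use pos in force)
    hence "{1<..<(2::real)} \<in> null_sets lborel" by (subst AE_iff_null_sets) auto
    hence "emeasure lborel {1<..<(2::real)} = 0" by auto
    thus False by simp
  qed
  ultimately show ?thesis by simp
qed

lemma wk_pos: "t > 1 \<Longrightarrow> wk k t > 0" unfolding wk_def by simp
lemma wk_nn: "t \<ge> 1 \<Longrightarrow> wk k t \<ge> 0" unfolding wk_def by simp

lemma final_alg:
  fixes a P1 P2 U1 U2 f :: real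
  assumes "a > 0"
  shows "1 / (4 * pi * a) * (P1 * (2 powr (-1/2) * f * U1) + a powr (1/2) * P2 * (2 powr (-1/2) * f * U2))
    = a powr (-3/4) * f / (4 * sqrt 2 * pi) * (a powr (1/4) * P2 * U2 + (1/a) powr (1/4) * P1 * U1)"
proof -
  have e1: "a powr (-3/4) * a powr (1/4) = a powr (1/2) / a"
  proof -
    have "a powr (-3/4) * a powr (1/4) = a powr (1/2 - 1)" by (simp add: powr_add[symmetric])
    also have "\<dots> = a powr (1/2) / a" using assms powr_diff[of a "1/2" 1] by simp
    finally show ?thesis .
  qed
  have e2: "a powr (-3/4) * (1/a) powr (1/4) = 1 / a"
    using assms by (simp add: powr_divide powr_add[symmetric] powr_minus_divide[symmetric])
  have e3: "2 powr (-1/2) = 1 / sqrt (2::real)"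
    by (simp add: powr_minus_divide sqrt_def powr_half_sqrt[symmetric] root_powr_inverse)
  have "a powr (-3/4) * f / (4 * sqrt 2 * pi) * (a powr (1/4) * P2 * U2 + (1/a) powr (1/4) * P1 * U1)
      = f / (4 * sqrt 2 * pi) * ((a powr (-3/4) * a powr (1/4)) * P2 * U2 + (a powr (-3/4) * (1/a) powr (1/4)) * P1 * U1)"
    by (simp add: algebra_simps)
  also have "\<dots> = f / (4 * sqrt 2 * pi) * (a powr (1/2) / a * P2 * U2 + 1 / a * P1 * U1)"
    unfolding e1 e2 ..
  finally show ?thesis unfolding e3 using assms by (simp add: field_simps)
qed

theorem theorem3:
  fixes a :: real and k :: nat
  assumes "a > 0" and "k \<ge> 1"
  shows "epsilon k a < B_bound k a"
proof -
  define z1 where "z1 = 2 * pi * (1 / a)"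
  define z2 where "z2 = 2 * pi * a"
  have z1: "z1 > 0" and z2: "z2 > 0" using assms unfolding z1_def z2_def by auto
  define P1 where "P1 = PsiTheta (1 / a)"
  define P2 where "P2 = a powr (1/2) * PsiTheta a"
  define F where "F t = (psiA a t + a powr (1/2) * phiA a t) * wk k t" for t
  define G where "G t = P1 * (exp (- (z1 / 2) * (t - 1)) * wk k t) + P2 * (exp (- (z2 / 2) * (t - 1)) * wk k t)" for t
  define X where "X t = indicator {1..} t * F t" for t
  define Y where "Y t = indicator {1..} t * G t" for t
  have psi_eq: "psiA a t = (\<Sum>n. exp (- pi * (real (Suc n))\<^sup>2 * (1 / a) * t))" for t
    unfolding psiA_def by simp
  have phi_eq: "phiA a t = (\<Sum>n. exp (- pi * (real (Suc n))\<^sup>2 * a * t))" for t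
    unfolding phiA_def by simp
  have ex1: "exp (- pi * (1 / a) * (t - 1)) = exp (- (z1 / 2) * (t - 1))" for t
    unfolding z1_def by simp
  have ex2: "exp (- pi * a * (t - 1)) = exp (- (z2 / 2) * (t - 1))" for t
    unfolding z2_def by simp
  have sa: "a powr (1/2) > 0" using assms by simp
  have FG_le: "F t \<le> G t" if "t \<ge> 1" for t
  proof -
    have "psiA a t \<le> P1 * exp (- (z1 / 2) * (t - 1))"
      unfolding psi_eq P1_def ex1[symmetric] using series_bound(1)[of "1/a" t] assms that by simp
    moreover have "phiA a t \<le> PsiTheta a * exp (- (z2 / 2) * (t - 1))"
      unfolding phi_eq ex2[symmetric] using series_bound(1)[of a t] assms that by simp
    ultimately have "psiA a t + a powr (1/2) * phiA a t \<le> P1 * exp (- (z1 / 2) * (t - 1)) + P2 * exp (- (z2 / 2) * (t - 1))"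
      unfolding P2_def using sa by (smt (verit) mult_left_mono mult.assoc)
    thus ?thesis unfolding F_def G_def using wk_nn[OF that, of k]
      by (smt (verit) mult_right_mono distrib_right mult.assoc)
  qed
  have FG_less: "F t < G t" if "t > 1" for t
  proof -
    have "psiA a t < P1 * exp (- (z1 / 2) * (t - 1))"
      unfolding psi_eq P1_def ex1[symmetric] using series_bound(2)[of "1/a" t] assms that by simp
    moreover have "phiA a t < PsiTheta a * exp (- (z2 / 2) * (t - 1))"
      unfolding phi_eq ex2[symmetric] using series_bound(2)[of a t] assms that by simp
    ultimately have "psiA a t + a powr (1/2) * phiA a t < P1 * exp (- (z1 / 2) * (t - 1)) + P2 * exp (- (z2 / 2) * (t - 1))"
      unfolding P2_def using sa by (smt (verit) mult_strict_left_mono mult.assoc)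
    thus ?thesis unfolding F_def G_def using wk_pos[OF that, of k]
      by (smt (verit) mult_strict_right_mono distrib_right mult.assoc)
  qed
  have P1_nn: "P1 \<ge> 0" unfolding P1_def PsiTheta_def using assms
    by (intro suminf_nonneg summ) auto
  have P2_nn: "P2 \<ge> 0" unfolding P2_def PsiTheta_def using assms
    by (intro mult_nonneg_nonneg suminf_nonneg summ) auto
  have P2_pos: "P2 > 0" unfolding P2_def PsiTheta_def using assms sa
    by (intro mult_pos_pos suminf_pos summ) auto
  have G_pos: "G t > 0" if "t > 1" for t
    unfolding G_def using P1_nn P2_pos wk_pos[OF that, of k]
    by (intro add_nonneg_pos mult_nonneg_nonneg mult_pos_pos) auto
  have G_nn: "G t \<ge> 0" if "t \<ge> 1" for t
    unfolding G_def using P1_nn P2_nn wk_nn[OF that, of k] by simp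
  have i1: "integrable lborel (\<lambda>t. indicator {1..} t * (exp (- (z1 / 2) * (t - 1)) * wk k t))"
    using main_integral(1)[OF assms(2) z1] unfolding set_integrable_def by simp
  have i2: "integrable lborel (\<lambda>t. indicator {1..} t * (exp (- (z2 / 2) * (t - 1)) * wk k t))"
    using main_integral(1)[OF assms(2) z2] unfolding set_integrable_def by simp
  have Y_eq: "Y = (\<lambda>t. P1 * (indicator {1..} t * (exp (- (z1 / 2) * (t - 1)) * wk k t))
                 + P2 * (indicator {1..} t * (exp (- (z2 / 2) * (t - 1)) * wk k t)))"
    unfolding Y_def G_def by (auto simp: fun_eq_iff algebra_simps)
  have Yint: "integrable lborel Y" unfolding Y_eq using i1 i2 by simp
  have YI: "integral\<^sup>L lborel Y = P1 * (2 powr (-1/2) * fact (2 * k) * tricomiU (real (2 * k + 1)) (1/2) z1)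
      + P2 * (2 powr (-1/2) * fact (2 * k) * tricomiU (real (2 * k + 1)) (1/2) z2)"
    unfolding Y_eq using i1 i2 main_integral(2)[OF assms(2) z1] main_integral(2)[OF assms(2) z2]
    by (simp add: set_lebesgue_integral_def)
  have XY: "integral\<^sup>L lborel X < integral\<^sup>L lborel Y"
  proof (cases "integrable lborel X")
    case True
    have "integral\<^sup>L lborel (\<lambda>t. Y t - X t) > 0"
    proof (rule pos_integral)
      show "integrable lborel (\<lambda>t. Y t - X t)" using True Yint by simp
    qed (use FG_le FG_less in \<open>auto simp: X_def Y_def indicator_def\<close>)
    thus ?thesis using True Yint by simp
  next
    case False
    have "integral\<^sup>L lborel Y > 0"
      by (rule pos_integral) (use Yint G_nn G_pos in \<open>auto simp: Y_def indicator_def\<close>)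
    thus ?thesis using False by (simp add: not_integrable_integral_eq)
  qed
  have eps: "epsilon k a = 1 / (4 * pi * a) * integral\<^sup>L lborel X"
    unfolding epsilon_def X_def F_def wk_def set_lebesgue_integral_def by simp
  have B: "B_bound k a = 1 / (4 * pi * a) * integral\<^sup>L lborel Y"
    unfolding YI B_bound_def E_fun_def P1_def P2_def z1_def z2_def
    using final_alg[OF assms(1)] by (simp add: mult.assoc)
  show ?thesis unfolding eps B using XY assms by (simp add: divide_simps)
qed

end
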